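(* Let $\mathcal{G}_D=(\mathcal{V}_D,\mathcal{E}_D)$ be a connected finite undirected graph with $n$ nodes, $m$ edges, and a set of $n_g$ source nodes $\mathcal{V}_g\subset\mathcal{V}_D$, the remaining nodes being sinks. Let supplies $g_i>0$ ($i\in\mathcal{V}_g$, zero otherwise), demands $d_j>0$ ($j\notin\mathcal{V}_g$, zero otherwise) with $\sum_i g_i=\sum_j d_j$, and capacities $\bar{x}_{i,j}\ge0$ on edges be given. Call a set $\mathcal{S}$ of directed edges a feasible distribution configuration if each element of $\mathcal{S}$ is an orientation of an edge of $\mathcal{E}_D$, the directed graph $(\mathcal{V}_D,\mathcal{S})$ is a polyforest (its underlying undirected graph is a forest), and there exist flows $x_{i,j}>0$, $(i\to j)\in\mathcal{S}$, with $x_{i,j}\le\bar{x}_{i,j}$ and $\sum_{(k\to j)\in\mathcal{S}}x_{k,j}-\sum_{(i\to k)\in\mathcal{S}}x_{i,k}=g_k-d_k$ for every node $k$. Then the number of feasible distribution configurations is at most $\det(\mathcal{L}'(\mathcal{G}_D))$, where $\mathcal{L}'(\mathcal{G}_D)$ is a cofactor of the Laplacian matrix of $\mathcal{G}_D$ (the Laplacian with one row and the corresponding column deleted).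
   Context: A polyforest is a directed acyclic graph whose underlying undirected graph is a forest. The Laplacian of $\mathcal{G}_D$ is $D-A$ with $D$ the degree matrix and $A$ the adjacency matrix. *)

theory Defs
  imports "Jordan_Normal_Form.Determinant"
begin

definition simple_graph :: "nat \<Rightarrow> nat set set \<Rightarrow> bool" where
  "simple_graph n E \<longleftrightarrow> (\<forall>e\<in>E. \<exists>a b. e = {a, b} \<and> a \<noteq> b \<and> a < n \<and> b < n)"

definition connected_graph :: "nat \<Rightarrow> nat set set \<Rightarrow> bool" where
  "connected_graph n E \<longleftrightarrow> 0 < n \<and>
     (\<forall>u<n. \<forall>v<n. (u, v) \<in> {(a, b). {a, b} \<in> E}\<^sup>*)"

definition laplacian :: "nat \<Rightarrow> nat set set \<Rightarrow> real mat" where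
  "laplacian n E = mat n n (\<lambda>(i, j).
      if i = j then real (card {k. k < n \<and> {i, k} \<in> E})
      else if {i, j} \<in> E then -1 else 0)"

definition underlying :: "(nat \<times> nat) set \<Rightarrow> nat set set" where
  "underlying S = {{i, j} | i j. (i, j) \<in> S}"

definition has_cycle :: "nat set set \<Rightarrow> bool" where
  "has_cycle U \<longleftrightarrow> (\<exists>vs. length vs \<ge> 3 \<and> distinct vs \<and>
      (\<forall>i. Suc i < length vs \<longrightarrow> {vs ! i, vs ! Suc i} \<in> U) \<and>
      {last vs, hd vs} \<in> U)"

definition polyforest :: "(nat \<times> nat) set \<Rightarrow> bool" where
  "polyforest S \<longleftrightarrow> acyclic S \<and> \<not> has_cycle (underlying S)"

definition feasible_config ::
  "nat \<Rightarrow> nat set set \<Rightarrow> (nat \<Rightarrow> real) \<Rightarrow> (nat \<Rightarrow> real) \<Rightarrow> (nat \<Rightarrow> nat \<Rightarrow> real)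
     \<Rightarrow> (nat \<times> nat) set \<Rightarrow> bool" where
  "feasible_config n E g d cap S \<longleftrightarrow>
     (\<forall>(i, j)\<in>S. {i, j} \<in> E) \<and> polyforest S \<and>
     (\<exists>x :: nat \<Rightarrow> nat \<Rightarrow> real.
        (\<forall>(i, j)\<in>S. 0 < x i j \<and> x i j \<le> cap i j) \<and>
        (\<forall>k<n. (\<Sum>j\<in>{j. (k, j) \<in> S}. x k j) - (\<Sum>i\<in>{i. (i, k) \<in> S}. x i k)
                = g k - d k))"

end

theory Submission
  imports Defs "HOL-Library.FuncSet"
begin


definition MR :: "nat \<Rightarrow> nat set \<Rightarrow> nat set set \<Rightarrow> real mat" where
  "MR n R E = mat n n (\<lambda>(i,j). if i \<in> R \<or> j \<in> R then (if i = j then 1 else 0)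
       else laplacian n E $$ (i,j))"

lemma MR_carrier[simp]: "MR n R E \<in> carrier_mat n n"
  by (simp add: MR_def)

lemma MR_dim[simp]: "dim_row (MR n R E) = n" "dim_col (MR n R E) = n"
  by (simp_all add: MR_def)

lemma det_row_diff:
  fixes A B :: "real mat"
  assumes A: "A \<in> carrier_mat n n" and B: "B \<in> carrier_mat n n" and i: "i < n"
    and eq: "\<And>k j. k < n \<Longrightarrow> j < n \<Longrightarrow> k \<noteq> i \<Longrightarrow> A $$ (k,j) = B $$ (k,j)"
  shows "det A = det B + (\<Sum>j<n. (A $$ (i,j) - B $$ (i,j)) * cofactor B i j)"
proof -
  have cof: "cofactor A i j = cofactor B i j" if "j < n" for j
  proof -
    have "mat_delete A i j = mat_delete B i j"
      using A B eq i unfolding mat_delete_def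
      by (intro eq_matI) auto
    then show ?thesis unfolding cofactor_def by simp
  qed
  have "det A = (\<Sum>j<n. A $$ (i,j) * cofactor A i j)" by (rule laplace_expansion_row[OF A i])
  also have "\<dots> = (\<Sum>j<n. A $$ (i,j) * cofactor B i j)" using cof by simp
  also have "\<dots> = (\<Sum>j<n. B $$ (i,j) * cofactor B i j) + (\<Sum>j<n. (A $$ (i,j) - B $$ (i,j)) * cofactor B i j)"
    by (simp add: sum.distrib[symmetric] algebra_simps)
  also have "(\<Sum>j<n. B $$ (i,j) * cofactor B i j) = det B" by (rule laplace_expansion_row[OF B i, symmetric])
  finally show ?thesis .
qed

lemma det_unit_row:
  fixes A :: "real mat"
  assumes A: "A \<in> carrier_mat n n" and i: "i < n"
    and row: "\<And>j. j < n \<Longrightarrow> A $$ (i,j) = (if j = i then 1 else 0)"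
  shows "det A = det (mat_delete A i i)"
proof -
  have "det A = (\<Sum>j<n. A $$ (i,j) * cofactor A i j)" by (rule laplace_expansion_row[OF A i])
  also have "\<dots> = (\<Sum>j<n. (if j = i then cofactor A i j else 0))"
    by (rule sum.cong) (auto simp: row)
  also have "\<dots> = cofactor A i i" using i by simp
  also have "\<dots> = det (mat_delete A i i)" unfolding cofactor_def by simp
  finally show ?thesis .
qed

lemma simple_graph_finite: "simple_graph n E \<Longrightarrow> finite E"
proof -
  assume "simple_graph n E"
  then have "E \<subseteq> Pow {0..<n}" unfolding simple_graph_def by auto
  then show "finite E" by (rule finite_subset) auto
qed

lemma lap_diag: "i < n \<Longrightarrow> laplacian n E $$ (i,i) = real (card {k. k < n \<and> {i, k} \<in> E})"
  by (simp add: laplacian_def)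

lemma lap_off: "i < n \<Longrightarrow> j < n \<Longrightarrow> i \<noteq> j \<Longrightarrow> laplacian n E $$ (i,j) = (if {i,j} \<in> E then -1 else 0)"
  by (simp add: laplacian_def)

lemma det_MR_step:
  assumes sg: "simple_graph n E" and e: "{u,v} \<in> E" and u: "u \<notin> R" and v: "v \<in> R"
  shows "det (MR n R E) = det (MR n R (E - {{u,v}})) + det (MR n (insert u R) (E - {{u,v}}))"
proof -
  from sg e have un: "u < n" and vn: "v < n" and uv: "u \<noteq> v"
    unfolding simple_graph_def by (auto simp: doubleton_eq_iff)
  let ?A = "MR n R E" and ?B = "MR n R (E - {{u,v}})" and ?C = "MR n (insert u R) (E - {{u,v}})"
  have ne: "{i,k} \<noteq> {u,v}" if "i \<noteq> u" "i \<noteq> v" for i k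
    using that by (auto simp: doubleton_eq_iff)
  have offdiag: "laplacian n E $$ (i,j) = laplacian n (E - {{u,v}}) $$ (i,j)"
    if "i < n" "j < n" "i \<notin> R" "j \<notin> R" "i \<noteq> u" for i j
  proof -
    have iv: "i \<noteq> v" using that v by blast
    have s1: "{k. k < n \<and> {i, k} \<in> E} = {k. k < n \<and> {i, k} \<in> E - {{u,v}}}"
      using ne[OF that(5) iv] by blast
    have s2: "{i,j} \<in> E \<longleftrightarrow> {i,j} \<in> E - {{u,v}}"
      using ne[OF that(5) iv] by blast
    show ?thesis
    proof (cases "i = j")
      case True
      then show ?thesis using lap_diag[OF that(1), of E] lap_diag[OF that(1), of "E - {{u,v}}"] s1
        by metis
    next
      case False
      then show ?thesis using lap_off[OF that(1,2) False, of E] lap_off[OF that(1,2) False, of "E - {{u,v}}"] s2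
        by metis
    qed
  qed
  have rowu: "laplacian n E $$ (u,j) = laplacian n (E - {{u,v}}) $$ (u,j) + (if j = u then 1 else 0)"
    if "j < n" "j \<notin> R" for j
  proof (cases "j = u")
    case True
    have "{k. k < n \<and> {u, k} \<in> E} = insert v {k. k < n \<and> {u, k} \<in> E - {{u,v}}}"
    proof (rule Set.set_eqI)
      fix k show "k \<in> {k. k < n \<and> {u, k} \<in> E} \<longleftrightarrow> k \<in> insert v {k. k < n \<and> {u, k} \<in> E - {{u,v}}}"
      proof (cases "k = v")
        case True thus ?thesis using e vn by simp
      next
        case False
        then have "{u,k} \<noteq> {u,v}" by (auto simp: doubleton_eq_iff)
        thus ?thesis using False by simp
      qed
    qed
    moreover have "v \<notin> {k. k < n \<and> {u, k} \<in> E - {{u,v}}}" by blast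
    moreover have "finite {k. k < n \<and> {u, k} \<in> E - {{u,v}}}" by simp
    ultimately have "card {k. k < n \<and> {u, k} \<in> E} = Suc (card {k. k < n \<and> {u, k} \<in> E - {{u,v}}})"
      by simp
    then show ?thesis using True un by (simp add: laplacian_def)
  next
    case False
    have jv: "j \<noteq> v" using that v by blast
    have "{u,j} \<noteq> {u,v}" using jv by (auto simp: doubleton_eq_iff)
    then have "{u,j} \<in> E \<longleftrightarrow> {u,j} \<in> E - {{u,v}}" by blast
    then show ?thesis using False that un by (simp add: laplacian_def)
  qed
  have AB: "det ?A = det ?B + (\<Sum>j<n. (?A $$ (u,j) - ?B $$ (u,j)) * cofactor ?B u j)"
    apply (rule det_row_diff[OF MR_carrier MR_carrier un])
    using offdiag by (auto simp: MR_def)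
  have "(\<Sum>j<n. (?A $$ (u,j) - ?B $$ (u,j)) * cofactor ?B u j) = (\<Sum>j<n. if j = u then cofactor ?B u j else 0)"
    apply (rule sum.cong, simp)
    using rowu u un by (auto simp: MR_def)
  also have "\<dots> = cofactor ?B u u" using un by simp
  also have "\<dots> = det (mat_delete ?B u u)" unfolding cofactor_def by simp
  also have "mat_delete ?B u u = mat_delete ?C u u"
    unfolding mat_delete_def by (intro eq_matI) (auto simp: MR_def)
  also have "det (mat_delete ?C u u) = det ?C"
    by (rule det_unit_row[OF MR_carrier un, symmetric]) (use un in \<open>auto simp: MR_def\<close>)
  finally show ?thesis using AB by simp
qed

lemma det_MR_all:
  assumes "{0..<n} \<subseteq> R"
  shows "det (MR n R E) = 1"
proof -
  have "MR n R E = 1\<^sub>m n" using assms by (intro eq_matI) (auto simp: MR_def)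
  then show ?thesis by simp
qed

lemma det_MR_sing:
  assumes sg: "simple_graph n E" and nocross: "\<And>a b. {a,b} \<in> E \<Longrightarrow> a \<in> R \<Longrightarrow> b \<in> R"
    and w: "w < n" "w \<notin> R"
  shows "det (MR n R E) = 0"
proof -
  let ?v = "vec n (\<lambda>i. if i \<in> R then 0 else (1::real))"
  have "?v \<noteq> 0\<^sub>v n"
  proof
    assume "?v = 0\<^sub>v n"
    then have "?v $ w = 0\<^sub>v n $ w" by simp
    then show False using w by simp
  qed
  moreover have "MR n R E *\<^sub>v ?v = 0\<^sub>v n"
  proof (rule eq_vecI)
    fix i assume i: "i < dim_vec (0\<^sub>v n :: real vec)"
    then have i: "i < n" by simp
    have "(MR n R E *\<^sub>v ?v) $ i = (\<Sum>j<n. MR n R E $$ (i,j) * ?v $ j)"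
      using i by (simp add: scalar_prod_def atLeast0LessThan)
    also have "\<dots> = 0"
    proof (cases "i \<in> R")
      case True
      then show ?thesis using i by (auto simp: MR_def intro!: sum.neutral)
    next
      case False
      let ?N = "{k. k < n \<and> {i, k} \<in> E}"
      have ni: "k \<notin> R \<and> k \<noteq> i" if "{i,k} \<in> E" for k
      proof
        show "k \<notin> R"
        proof
          assume "k \<in> R"
          moreover have "{k,i} \<in> E" using that by (simp add: insert_commute)
          ultimately have "i \<in> R" using nocross by blast
          then show False using False by blast
        qed
        show "k \<noteq> i"
        proof
          assume "k = i"
          then have "{i} \<in> E" using that by simp
          then show False using sg unfolding simple_graph_def by (force simp: doubleton_eq_iff)
        qed
      qed
      have "(\<Sum>j<n. MR n R E $$ (i,j) * ?v $ j) = (\<Sum>j<n. (if j = i then real (card ?N) else 0) - (if j \<in> ?N then 1 else 0))"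
      proof (rule sum.cong)
        fix j assume "j \<in> {..<n}"
        then have j: "j < n" by simp
        show "MR n R E $$ (i,j) * ?v $ j = (if j = i then real (card ?N) else 0) - (if j \<in> ?N then 1 else 0)"
        proof (cases "j \<in> R")
          case True
          then have "j \<notin> ?N" "j \<noteq> i" using ni False by auto
          then show ?thesis using True j i by (simp add: MR_def)
        next
          case jR: False
          show ?thesis
          proof (cases "j = i")
            case True
            then have "j \<notin> ?N" using ni by blast
            then show ?thesis using True jR False j i by (simp add: MR_def laplacian_def)
          next
            case ji: False
            then show ?thesis using jR False j i by (simp add: MR_def laplacian_def)
          qed
        qed
      qed simp
      also have "\<dots> = (\<Sum>j<n. (if j = i then real (card ?N) else 0)) - (\<Sum>j<n. (if j \<in> ?N then 1 else 0))"
        by (rule sum_subtractf)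
      also have "(\<Sum>j<n. (if j = i then real (card ?N) else 0)) = real (card ?N)"
        using i by simp
      also have "(\<Sum>j<n. (if j \<in> ?N then 1 else (0::real))) = (\<Sum>j\<in>?N. 1)"
        by (rule sum.mono_neutral_cong_right) auto
      also have "(\<Sum>j\<in>?N. (1::real)) = real (card ?N)" by simp
      finally show ?thesis by simp
    qed
    finally show "(MR n R E *\<^sub>v ?v) $ i = 0\<^sub>v n $ i" using i by simp
  qed (simp)
  moreover have "?v \<in> carrier_vec n" by simp
  ultimately show ?thesis
    using det_0_iff_vec_prod_zero[OF MR_carrier[of n R E]] by blast
qed

lemma det_MR_laplacian:
  assumes r: "r < n"
  shows "det (mat_delete (laplacian n E) r r) = det (MR n {r} E)"
proof -
  have "det (MR n {r} E) = det (mat_delete (MR n {r} E) r r)"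
    by (rule det_unit_row[OF MR_carrier r]) (use r in \<open>auto simp: MR_def\<close>)
  also have "mat_delete (MR n {r} E) r r = mat_delete (laplacian n E) r r"
    unfolding mat_delete_def by (intro eq_matI) (auto simp: MR_def laplacian_def)
  finally show ?thesis by simp
qed



inductive reach :: "(nat \<Rightarrow> nat) \<Rightarrow> nat set \<Rightarrow> nat \<Rightarrow> bool" for p R where
  reach_base: "x \<in> R \<Longrightarrow> reach p R x"
| reach_step: "reach p R (p x) \<Longrightarrow> reach p R x"

definition PM :: "nat \<Rightarrow> nat set \<Rightarrow> nat set set \<Rightarrow> (nat \<Rightarrow> nat) set" where
  "PM n R E = {p. (\<forall>x. (x \<in> R \<or> n \<le> x) \<longrightarrow> p x = x) \<and>
                  (\<forall>x<n. x \<notin> R \<longrightarrow> {x, p x} \<in> E \<and> reach p R x)}"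

lemma simple_edge: "simple_graph n E \<Longrightarrow> {a,b} \<in> E \<Longrightarrow> a < n \<and> b < n \<and> a \<noteq> b"
  unfolding simple_graph_def by (force simp: doubleton_eq_iff)

lemma PM_finite:
  assumes sg: "simple_graph n E"
  shows "finite (PM n R E)"
proof -
  let ?F = "{p. (\<forall>x. n \<le> x \<longrightarrow> p x = x) \<and> (\<forall>x<n. p x < n)}"
  have sub: "PM n R E \<subseteq> ?F"
  proof
    fix p assume p: "p \<in> PM n R E"
    have "p x < n" if "x < n" for x
    proof (cases "x \<in> R")
      case True then show ?thesis using p that unfolding PM_def by auto
    next
      case False
      then have "{x, p x} \<in> E" using p that unfolding PM_def by auto
      then show ?thesis using simple_edge[OF sg] by blast
    qed
    then show "p \<in> ?F" using p unfolding PM_def by auto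
  qed
  have inj: "inj_on (\<lambda>p. restrict p {0..<n}) ?F"
  proof (rule inj_onI)
    fix p q assume p: "p \<in> ?F" and q: "q \<in> ?F" and eq: "restrict p {0..<n} = restrict q {0..<n}"
    show "p = q"
    proof
      fix x show "p x = q x"
      proof (cases "x < n")
        case True then show ?thesis using fun_cong[OF eq, of x] by simp
      next
        case False then show ?thesis using p q by auto
      qed
    qed
  qed
  have "(\<lambda>p. restrict p {0..<n}) ` ?F \<subseteq> PiE {0..<n} (\<lambda>_. {0..<n})"
    by auto
  then have "finite ((\<lambda>p. restrict p {0..<n}) ` ?F)"
    by (rule finite_subset) (simp add: finite_PiE)
  then have "finite ?F" using finite_imageD inj by blast
  then show ?thesis using sub finite_subset by blast
qed

lemma reach_upd1: "reach p R x \<Longrightarrow> reach (p(u:=u)) (insert u R) x"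
proof (induction rule: reach.induct)
  case (reach_base x) then show ?case by (simp add: reach.reach_base)
next
  case (reach_step x)
  show ?case
  proof (cases "x = u")
    case True then show ?thesis by (simp add: reach.reach_base)
  next
    case False then show ?thesis using reach_step.IH by - (rule reach.reach_step, simp)
  qed
qed

lemma reach_upd2: "reach p (insert u R) x \<Longrightarrow> v \<in> R \<Longrightarrow> reach (p(u:=v)) R x"
proof (induction rule: reach.induct)
  case (reach_base x)
  show ?case
  proof (cases "x = u")
    case True
    have "reach (p(u:=v)) R v" using reach_base by (simp add: reach.reach_base)
    moreover have "(p(u:=v)) x = v" using True by simp
    ultimately show ?thesis by (metis reach.reach_step)
  next
    case False then show ?thesis using reach_base by (simp add: reach.reach_base)
  qed
next
  case (reach_step x)
  show ?case
  proof (cases "x = u")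
    case True
    have "reach (p(u:=v)) R v" using reach_step by (simp add: reach.reach_base)
    moreover have "(p(u:=v)) x = v" using True by simp
    ultimately show ?thesis by (metis reach.reach_step)
  next
    case False then show ?thesis using reach_step by - (rule reach.reach_step, simp)
  qed
qed

lemma PM_step:
  assumes sg: "simple_graph n E" and e: "{u,v} \<in> E" and u: "u \<notin> R" and v: "v \<in> R"
  shows "card (PM n R E) = card (PM n R (E - {{u,v}})) + card (PM n (insert u R) (E - {{u,v}}))"
proof -
  have un: "u < n" and vn: "v < n" and uv: "u \<noteq> v" using simple_edge[OF sg e] by auto
  have sg': "simple_graph n (E - {{u,v}})" using sg unfolding simple_graph_def by auto
  let ?A = "PM n R E"
  let ?A1 = "{p \<in> ?A. p u \<noteq> v}" and ?A2 = "{p \<in> ?A. p u = v}"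
  have split: "?A = ?A1 \<union> ?A2" by blast
  have fin: "finite ?A" by (rule PM_finite[OF sg])
  have "card ?A = card ?A1 + card ?A2"
    by (subst split, rule card_Un_disjoint) (use fin in auto)
  moreover have "?A1 = PM n R (E - {{u,v}})"
  proof
    show "?A1 \<subseteq> PM n R (E - {{u,v}})"
    proof
      fix p assume p: "p \<in> ?A1"
      have "{x, p x} \<noteq> {u,v}" if "x < n" "x \<notin> R" for x
      proof
        assume "{x, p x} = {u,v}"
        then have "(x = u \<and> p x = v) \<or> (x = v \<and> p x = u)" by (auto simp: doubleton_eq_iff)
        then show False using p v that by auto
      qed
      then show "p \<in> PM n R (E - {{u,v}})" using p unfolding PM_def by auto
    qed
  next
    show "PM n R (E - {{u,v}}) \<subseteq> ?A1"
    proof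
      fix p assume p: "p \<in> PM n R (E - {{u,v}})"
      then have "{u, p u} \<in> E - {{u,v}}" using un u unfolding PM_def by auto
      then have "p u \<noteq> v" by auto
      then show "p \<in> ?A1" using p unfolding PM_def by auto
    qed
  qed
  moreover have "card ?A2 = card (PM n (insert u R) (E - {{u,v}}))"
  proof (rule bij_betw_same_card[of "\<lambda>p. p(u:=u)"], rule bij_betw_byWitness[where f'="\<lambda>p. p(u:=v)"])
    show "\<forall>a\<in>?A2. (a(u:=u))(u := v) = a" by auto
    show "\<forall>a\<in>PM n (insert u R) (E - {{u, v}}). (a(u:=v))(u := u) = a"
      unfolding PM_def by auto
    show "(\<lambda>p. p(u:=u)) ` ?A2 \<subseteq> PM n (insert u R) (E - {{u, v}})"
    proof
      fix q assume "q \<in> (\<lambda>p. p(u:=u)) ` ?A2"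
      then obtain p where p: "p \<in> ?A" "p u = v" and q: "q = p(u:=u)" by blast
      have pf: "p x = x" if "x \<in> R \<or> n \<le> x" for x using p(1) that unfolding PM_def by blast
      have pe: "{x, p x} \<in> E \<and> reach p R x" if "x < n" "x \<notin> R" for x
        using p(1) that unfolding PM_def by blast
      have ne: "{x, p x} \<noteq> {u,v}" if "x \<noteq> u" "x \<notin> R" for x
        using that v by (auto simp: doubleton_eq_iff)
      have f1: "q x = x" if "x \<in> insert u R \<or> n \<le> x" for x
      proof (cases "x = u")
        case True then show ?thesis using q by simp
      next
        case False then show ?thesis using q pf that by simp
      qed
      have f2: "{x, q x} \<in> E - {{u,v}} \<and> reach q (insert u R) x" if "x < n" "x \<notin> insert u R" for x
      proof -
        have xu: "x \<noteq> u" "x \<notin> R" using that by auto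
        have "q x = p x" using q xu by simp
        moreover have "reach q (insert u R) x" using reach_upd1[of p R x u] pe[OF that(1) xu(2)] q by simp
        ultimately show ?thesis using pe[OF that(1) xu(2)] ne[OF xu] by simp
      qed
      show "q \<in> PM n (insert u R) (E - {{u, v}})"
        unfolding PM_def using f1 f2 by blast
    qed
    show "(\<lambda>p. p(u:=v)) ` PM n (insert u R) (E - {{u, v}}) \<subseteq> ?A2"
    proof
      fix q assume "q \<in> (\<lambda>p. p(u:=v)) ` PM n (insert u R) (E - {{u, v}})"
      then obtain p where p: "p \<in> PM n (insert u R) (E - {{u, v}})" and q: "q = p(u:=v)" by blast
      have fx: "q x = x" if "x \<in> R \<or> n \<le> x" for x
        using that p q u un unfolding PM_def by auto
      have ed: "{x, q x} \<in> E \<and> reach q R x" if "x < n" "x \<notin> R" for x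
      proof -
        have r: "reach q R x"
        proof (cases "x = u")
          case True
          then show ?thesis using q v by - (rule reach.reach_step, simp add: reach.reach_base)
        next
          case False
          then have "reach p (insert u R) x" using p that unfolding PM_def by auto
          then show ?thesis using reach_upd2 v q by blast
        qed
        have "{x, q x} \<in> E"
        proof (cases "x = u")
          case True then show ?thesis using q e by simp
        next
          case False
          then show ?thesis using p that q unfolding PM_def by auto
        qed
        with r show ?thesis by blast
      qed
      have "q u = v" using q by simp
      then show "q \<in> ?A2" using fx ed unfolding PM_def by blast
    qed
  qed
  ultimately show ?thesis by simp
qed

lemma reach_nocross:
  assumes sg: "simple_graph n E" and nocross: "\<forall>a b. {a,b} \<in> E \<longrightarrow> a \<in> R \<longrightarrow> b \<in> R"
    and p: "p \<in> PM n R E"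
  shows "reach p R x \<Longrightarrow> x < n \<Longrightarrow> x \<notin> R \<Longrightarrow> False"
proof (induction rule: reach.induct)
  case (reach_base x) then show ?case by simp
next
  case (reach_step x)
  have ed: "{x, p x} \<in> E" using p reach_step.prems unfolding PM_def by auto
  then have "p x < n" using simple_edge[OF sg] by blast
  moreover have "p x \<notin> R"
  proof
    assume "p x \<in> R"
    moreover have "{p x, x} \<in> E" using ed by (simp add: insert_commute)
    ultimately show False using nocross reach_step.prems by blast
  qed
  ultimately show ?case using reach_step.IH by blast
qed

lemma PM_none:
  assumes sg: "simple_graph n E" and nocross: "\<forall>a b. {a,b} \<in> E \<longrightarrow> a \<in> R \<longrightarrow> b \<in> R"
    and w: "w < n" "w \<notin> R"
  shows "PM n R E = {}"
proof (rule ccontr)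
  assume "PM n R E \<noteq> {}"
  then obtain p where p: "p \<in> PM n R E" by blast
  then have "reach p R w" using w unfolding PM_def by auto
  then show False using reach_nocross[OF sg nocross p] w by blast
qed

lemma PM_all:
  assumes "{0..<n} \<subseteq> R"
  shows "PM n R E = {id}"
proof
  show "PM n R E \<subseteq> {id}"
  proof
    fix p assume p: "p \<in> PM n R E"
    have "p x = x" for x
      using p assms unfolding PM_def by (cases "x < n") auto
    then show "p \<in> {id}" by auto
  qed
  show "{id} \<subseteq> PM n R E" using assms unfolding PM_def by auto
qed

theorem matrix_tree:
  "simple_graph n E \<Longrightarrow> det (MR n R E) = real (card (PM n R E))"
proof (induction "card E" arbitrary: E R rule: less_induct)
  case less
  note sg = less.prems
  have finE: "finite E" by (rule simple_graph_finite[OF sg])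
  show ?case
  proof (cases "\<exists>a b. {a,b} \<in> E \<and> a \<notin> R \<and> b \<in> R")
    case True
    then obtain u v where e: "{u,v} \<in> E" and u: "u \<notin> R" and v: "v \<in> R" by blast
    have sg': "simple_graph n (E - {{u,v}})" using sg unfolding simple_graph_def by auto
    have lt: "card (E - {{u,v}}) < card E" using e finE by (metis card_Diff1_less)
    have "det (MR n R E) = det (MR n R (E - {{u,v}})) + det (MR n (insert u R) (E - {{u,v}}))"
      by (rule det_MR_step[OF sg e u v])
    also have "\<dots> = real (card (PM n R (E - {{u,v}}))) + real (card (PM n (insert u R) (E - {{u,v}})))"
      using less.hyps[OF lt sg'] by simp
    also have "\<dots> = real (card (PM n R E))"
      using PM_step[OF sg e u v] by simp
    finally show ?thesis .
  next
    case False
    have nocross: "b \<in> R" if "{a,b} \<in> E" "a \<in> R" for a b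
    proof (rule ccontr)
      assume "b \<notin> R"
      moreover have "{b,a} \<in> E" using that by (simp add: insert_commute)
      ultimately show False using False that by blast
    qed
    show ?thesis
    proof (cases "{0..<n} \<subseteq> R")
      case True
      then show ?thesis using det_MR_all PM_all by simp
    next
      case False
      then obtain w where w: "w < n" "w \<notin> R" by (auto simp: subset_iff)
      show ?thesis using det_MR_sing[OF sg nocross w] PM_none[OF sg _ w] nocross by simp
    qed
  qed
qed



definition erel :: "nat set set \<Rightarrow> (nat \<times> nat) set" where
  "erel T = {(a,b). {a,b} \<in> T}"

definition twosets :: "nat set set \<Rightarrow> bool" where
  "twosets T \<longleftrightarrow> (\<forall>e\<in>T. \<exists>a b. e = {a,b} \<and> a \<noteq> b)"

lemma has_cycle_mono: "has_cycle T \<Longrightarrow> T \<subseteq> T' \<Longrightarrow> has_cycle T'"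
  unfolding has_cycle_def by blast

lemma erel_conv: "(erel T)\<inverse> = erel T"
  unfolding erel_def by (auto simp: insert_commute)

lemma erel_sym: "(x,y) \<in> (erel T)\<^sup>* \<Longrightarrow> (y,x) \<in> (erel T)\<^sup>*"
proof -
  assume "(x,y) \<in> (erel T)\<^sup>*"
  then have "(y,x) \<in> ((erel T)\<inverse>)\<^sup>*" by (simp add: rtrancl_converse)
  then show ?thesis by (simp add: erel_conv)
qed

lemma erel_mono: "T \<subseteq> T' \<Longrightarrow> (erel T)\<^sup>* \<subseteq> (erel T')\<^sup>*"
  by (rule rtrancl_mono) (auto simp: erel_def)

lemma erel_edge: "{a,b} \<in> T \<Longrightarrow> (a,b) \<in> (erel T)\<^sup>*"
  by (rule r_into_rtrancl) (simp add: erel_def)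

lemma leaf:
  assumes fin: "finite T" and ts: "twosets T" and ne: "T \<noteq> {}" and nc: "\<not> has_cycle T"
  shows "\<exists>v w. {v,w} \<in> T \<and> v \<noteq> w \<and> (\<forall>e\<in>T. v \<in> e \<longrightarrow> e = {v,w})"
proof -
  define P where "P vs \<longleftrightarrow> distinct vs \<and> length vs \<ge> 2 \<and> (\<forall>i. Suc i < length vs \<longrightarrow> {vs!i, vs!Suc i} \<in> T)" for vs
  have finV: "finite (\<Union>T)"
  proof (rule finite_Union[OF fin])
    fix e assume "e \<in> T" then show "finite e" using ts unfolding twosets_def by auto
  qed
  have bound: "length vs < card (\<Union>T) + 1" if "P vs" for vs
  proof -
    have cP: "\<And>k. Suc k < length vs \<Longrightarrow> {vs!k, vs!Suc k} \<in> T" using that unfolding P_def by blast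
    have l2: "length vs \<ge> 2" using that unfolding P_def by blast
    have "set vs \<subseteq> \<Union>T"
    proof
      fix x assume "x \<in> set vs"
      then obtain i where i: "i < length vs" "vs!i = x" by (auto simp: in_set_conv_nth)
      show "x \<in> \<Union>T"
      proof (cases "Suc i < length vs")
        case True
        then have "{vs!i, vs!Suc i} \<in> T" using cP by blast
        then show ?thesis using i by blast
      next
        case False
        have "i \<noteq> 0" using False l2 by auto
        then obtain j where j: "i = Suc j" using not0_implies_Suc by blast
        have "Suc j < length vs" using i(1) j by simp
        then have "{vs!j, vs!Suc j} \<in> T" using cP by blast
        then show ?thesis using i j by blast
      qed
    qed
    then have "card (set vs) \<le> card (\<Union>T)" using finV card_mono by blast
    moreover have "card (set vs) = length vs" using that unfolding P_def by (simp add: distinct_card)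
    ultimately show ?thesis by simp
  qed
  obtain e0 where e0: "e0 \<in> T" using ne by blast
  then obtain a b where ab: "e0 = {a,b}" "a \<noteq> b" using ts unfolding twosets_def by blast
  have "P [a,b]" unfolding P_def using ab e0 by (auto simp: less_Suc_eq)
  then obtain vs where Pvs: "P vs" and maxl: "\<And>ws. P ws \<Longrightarrow> length ws \<le> length vs"
    using ex_has_greatest_nat[of P "[a,b]" length "card (\<Union>T) + 1"] bound by blast
  have len: "length vs \<ge> 2" and dist: "distinct vs"
    and cons: "\<And>i. Suc i < length vs \<Longrightarrow> {vs!i, vs!Suc i} \<in> T" using Pvs unfolding P_def by auto
  define v where "v = vs!0"
  define w where "w = vs!1"
  have vw: "{v,w} \<in> T" using cons[of 0] len unfolding v_def w_def by simp
  have l01: "0 < length vs" "1 < length vs" using len by auto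
  have vnw: "v \<noteq> w" unfolding v_def w_def
    using dist l01 distinct_conv_nth[of vs] zero_neq_one by metis
  have "\<forall>e\<in>T. v \<in> e \<longrightarrow> e = {v,w}"
  proof (intro ballI impI)
    fix e assume eT: "e \<in> T" and ve: "v \<in> e"
    obtain c d where cd: "e = {c,d}" "c \<noteq> d" using eT ts unfolding twosets_def by blast
    obtain y where y: "e = {v,y}" "y \<noteq> v" using cd ve by (auto simp: insert_commute)
    show "e = {v,w}"
    proof (rule ccontr)
      assume "e \<noteq> {v,w}"
      then have ynw: "y \<noteq> w" using y by auto
      show False
      proof (cases "y \<in> set vs")
        case False
        have "P (y # vs)" unfolding P_def
        proof (intro conjI allI impI)
          show "distinct (y # vs)" using False dist by simp
          show "2 \<le> length (y # vs)" using len by simp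
          fix i assume i: "Suc i < length (y # vs)"
          show "{(y # vs) ! i, (y # vs) ! Suc i} \<in> T"
          proof (cases i)
            case 0 then show ?thesis using y eT unfolding v_def by (simp add: insert_commute)
          next
            case (Suc j) then show ?thesis using cons[of j] i by simp
          qed
        qed
        then show False using maxl[of "y # vs"] by simp
      next
        case True
        then obtain i where i: "i < length vs" "vs!i = y" by (auto simp: in_set_conv_nth)
        have i0: "i \<noteq> 0"
        proof
          assume "i = 0" then have "y = v" using i unfolding v_def by simp
          then show False using y by simp
        qed
        have i1: "i \<noteq> 1"
        proof
          assume "i = 1" then have "y = w" using i unfolding w_def by simp
          then show False using ynw by simp
        qed
        let ?cs = "take (Suc i) vs"
        have lcs: "length ?cs = Suc i" using i by simp
        have "has_cycle T" unfolding has_cycle_def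
        proof (intro exI[of _ ?cs] conjI allI impI)
          show "3 \<le> length ?cs" using lcs i0 i1 by simp
          show "distinct ?cs" using dist by simp
          fix j assume "Suc j < length ?cs"
          then show "{?cs ! j, ?cs ! Suc j} \<in> T" using cons[of j] lcs i by simp
        next
          have "?cs \<noteq> []" using lcs by auto
          then have "last ?cs = ?cs ! (length ?cs - 1)" by (rule last_conv_nth)
          also have "\<dots> = vs!i" using lcs by simp
          finally have "last ?cs = vs!i" .
          moreover have "hd ?cs = v" unfolding v_def using l01 by (simp add: hd_conv_nth)
          ultimately show "{last ?cs, hd ?cs} \<in> T" using i y eT by (simp add: insert_commute)
        qed
        then show False using nc by simp
      qed
    qed
  qed
  then show ?thesis using vw vnw by blast
qed


lemma K_lemma:
  assumes T': "T' = T - {{v,w}}" and vw: "{v,w} \<in> T" "v \<noteq> w"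
    and leafv: "\<forall>e\<in>T. v \<in> e \<longrightarrow> e = {v,w}"
    and xy: "(x,y) \<in> (erel T)\<^sup>*"
  shows "(x,y) \<in> (erel T')\<^sup>* \<or> (x = v \<and> (w,y) \<in> (erel T')\<^sup>*) \<or> ((x,w) \<in> (erel T')\<^sup>* \<and> y = v) \<or> (x = v \<and> y = v)"
  using xy
proof (induction rule: rtrancl_induct)
  case base then show ?case by simp
next
  case (step y z)
  have iso: "a = v" if "(v,a) \<in> (erel T')\<^sup>*" for a
    using that
  proof (induction rule: rtrancl_induct)
    case base then show ?case by simp
  next
    case (step a b)
    then have "{v,b} \<in> T'" by (simp add: erel_def)
    then show ?case using leafv T' by auto
  qed
  have iso': "a = v" if "(a,v) \<in> (erel T')\<^sup>*" for a
    using iso erel_sym that by blast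
  have yz: "{y,z} \<in> T" using step.hyps(2) by (simp add: erel_def)
  show ?case
  proof (cases "{y,z} = {v,w}")
    case False
    then have yzT': "{y,z} \<in> T'" using yz T' by simp
    then have yzr: "(y,z) \<in> erel T'" by (simp add: erel_def)
    have ynv: "y \<noteq> v" using yzT' leafv T' by auto
    from step.IH show ?thesis
    proof (elim disjE conjE)
      assume "(x,y) \<in> (erel T')\<^sup>*" then show ?thesis using rtrancl_into_rtrancl[OF _ yzr] by blast
    next
      assume "x = v" "(w,y) \<in> (erel T')\<^sup>*" then show ?thesis using rtrancl_into_rtrancl[OF _ yzr] by blast
    next
      assume "y = v" then show ?thesis using ynv by simp
    next
      assume "y = v" then show ?thesis using ynv by simp
    qed
  next
    case True
    then have "(y = v \<and> z = w) \<or> (y = w \<and> z = v)" by (auto simp: doubleton_eq_iff)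
    then show ?thesis
    proof (elim disjE conjE)
      assume yv: "y = v" and zw: "z = w"
      from step.IH show ?thesis
      proof (elim disjE conjE)
        assume "(x,y) \<in> (erel T')\<^sup>*" then have "x = v" using iso' yv by simp
        then show ?thesis using zw by simp
      next
        assume "x = v" then show ?thesis using zw by simp
      next
        assume "(x,w) \<in> (erel T')\<^sup>*" then show ?thesis using zw by simp
      next
        assume "x = v" then show ?thesis using zw by simp
      qed
    next
      assume yw: "y = w" and zv: "z = v"
      from step.IH show ?thesis
      proof (elim disjE conjE)
        assume "(x,y) \<in> (erel T')\<^sup>*" then show ?thesis using yw zv by simp
      next
        assume "x = v" "(w,y) \<in> (erel T')\<^sup>*" then show ?thesis using zv by simp
      next
        assume "y = v" then show ?thesis using yw vw by simp
      next
        assume "y = v" then show ?thesis using yw vw by simp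
      qed
    qed
  qed
qed

lemma orient:
  assumes "finite T" "twosets T" "\<not> has_cycle T"
    "\<forall>x. \<exists>\<rho>\<in>R. (x,\<rho>) \<in> (erel T)\<^sup>*"
    "\<forall>\<rho>1\<in>R. \<forall>\<rho>2\<in>R. (\<rho>1,\<rho>2) \<in> (erel T)\<^sup>* \<longrightarrow> \<rho>1 = \<rho>2"
  shows "\<exists>q. (\<forall>x. q x = x \<longleftrightarrow> x \<in> R) \<and> (\<forall>x. x \<notin> R \<longrightarrow> {x, q x} \<in> T) \<and>
             (\<forall>a b. {a,b} \<in> T \<longrightarrow> q a = b \<or> q b = a) \<and> (\<forall>x. reach q R x)"
  using assms
proof (induction "card T" arbitrary: T R rule: less_induct)
  case less
  note fin = less.prems(1) and ts = less.prems(2) and nc = less.prems(3)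
    and cov = less.prems(4) and uniq = less.prems(5)
  show ?case
  proof (cases "T = {}")
    case True
    then have "erel T = {}" by (simp add: erel_def)
    then have allR: "x \<in> R" for x using cov by auto
    show ?thesis
      by (rule exI[of _ id]) (use allR True in \<open>auto intro: reach.reach_base\<close>)
  next
    case False
    obtain v w where vw: "{v,w} \<in> T" and vnw: "v \<noteq> w" and leafv: "\<forall>e\<in>T. v \<in> e \<longrightarrow> e = {v,w}"
      using leaf[OF fin ts False nc] by blast
    define T' where "T' = T - {{v,w}}"
    have T'T: "T' \<subseteq> T" unfolding T'_def by blast
    have lt: "card T' < card T" unfolding T'_def using fin vw by (metis card_Diff1_less)
    have fin': "finite T'" using fin T'T finite_subset by blast
    have ts': "twosets T'" using ts T'T unfolding twosets_def by blast
    have nc': "\<not> has_cycle T'" using nc has_cycle_mono T'T by blast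
    have iso: "a = v" if "(v,a) \<in> (erel T')\<^sup>*" for a
      using that
    proof (induction rule: rtrancl_induct)
      case base then show ?case by simp
    next
      case (step a b)
      then have "{v,b} \<in> T'" by (simp add: erel_def)
      then show ?case using leafv T'_def by auto
    qed
    have iso': "a = v" if "(a,v) \<in> (erel T')\<^sup>*" for a
      using iso erel_sym that by blast
    have sub: "(a,b) \<in> (erel T)\<^sup>*" if "(a,b) \<in> (erel T')\<^sup>*" for a b
      using erel_mono[OF T'T] that by blast
    have K: "(x,y) \<in> (erel T')\<^sup>* \<or> (x = v \<and> (w,y) \<in> (erel T')\<^sup>*) \<or> ((x,w) \<in> (erel T')\<^sup>* \<and> y = v) \<or> (x = v \<and> y = v)"
      if "(x,y) \<in> (erel T)\<^sup>*" for x y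
      by (rule K_lemma[OF T'_def vw vnw leafv that])
    have vwr: "(v,w) \<in> (erel T)\<^sup>*" by (rule erel_edge[OF vw])
    have T'v: "v \<notin> e" if "e \<in> T'" for e using that leafv T'_def by auto
    show ?thesis
    proof (cases "v \<in> R")
      case True
      have wR: "w \<notin> R" using uniq True vwr vnw by blast
      define R' where "R' = insert w R"
      have cov': "\<forall>x. \<exists>\<rho>\<in>R'. (x,\<rho>) \<in> (erel T')\<^sup>*"
      proof
        fix x
        obtain \<rho> where \<rho>: "\<rho> \<in> R" "(x,\<rho>) \<in> (erel T)\<^sup>*" using cov by blast
        from K[OF \<rho>(2)] show "\<exists>\<rho>\<in>R'. (x,\<rho>) \<in> (erel T')\<^sup>*"
        proof (elim disjE conjE)
          assume "(x,\<rho>) \<in> (erel T')\<^sup>*" then show ?thesis using \<rho> R'_def by blast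
        next
          assume "x = v" then show ?thesis using True R'_def by blast
        next
          assume "(x,w) \<in> (erel T')\<^sup>*" then show ?thesis using R'_def by blast
        next
          assume "x = v" then show ?thesis using True R'_def by blast
        qed
      qed
      have wbad: False if "\<rho> \<in> R" "(w,\<rho>) \<in> (erel T')\<^sup>*" for \<rho>
      proof -
        have "(v,\<rho>) \<in> (erel T)\<^sup>*" using vwr sub[OF that(2)] by (rule rtrancl_trans)
        then have "\<rho> = v" using uniq True that(1) by blast
        then have "w = v" using iso' that(2) by blast
        then show False using vnw by simp
      qed
      have uniq': "\<forall>\<rho>1\<in>R'. \<forall>\<rho>2\<in>R'. (\<rho>1,\<rho>2) \<in> (erel T')\<^sup>* \<longrightarrow> \<rho>1 = \<rho>2"
      proof (intro ballI impI)
        fix \<rho>1 \<rho>2 assume r1: "\<rho>1 \<in> R'" and r2: "\<rho>2 \<in> R'" and c: "(\<rho>1,\<rho>2) \<in> (erel T')\<^sup>*"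
        show "\<rho>1 = \<rho>2"
        proof (cases "\<rho>1 = w")
          case w1: True
          show ?thesis
          proof (cases "\<rho>2 = w")
            case True then show ?thesis using w1 by simp
          next
            case False
            then have "\<rho>2 \<in> R" using r2 R'_def by simp
            then show ?thesis using wbad c w1 by blast
          qed
        next
          case False
          then have r1R: "\<rho>1 \<in> R" using r1 R'_def by simp
          show ?thesis
          proof (cases "\<rho>2 = w")
            case True
            then have "(w,\<rho>1) \<in> (erel T')\<^sup>*" using c erel_sym by blast
            then show ?thesis using wbad r1R by blast
          next
            case False
            then have "\<rho>2 \<in> R" using r2 R'_def by simp
            then show ?thesis using uniq r1R sub[OF c] by blast
          qed
        qed
      qed
      obtain q' where q'1: "\<forall>x. q' x = x \<longleftrightarrow> x \<in> R'" and q'2: "\<forall>x. x \<notin> R' \<longrightarrow> {x, q' x} \<in> T'"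
        and q'3: "\<forall>a b. {a,b} \<in> T' \<longrightarrow> q' a = b \<or> q' b = a" and q'4: "\<forall>x. reach q' R' x"
        using less.hyps[OF lt fin' ts' nc' cov' uniq'] by blast
      define q where "q = q'(w := v)"
      have p1: "\<forall>x. q x = x \<longleftrightarrow> x \<in> R"
      proof
        fix x show "q x = x \<longleftrightarrow> x \<in> R"
          using q'1 wR vnw R'_def q_def by (cases "x = w") auto
      qed
      have p2: "\<forall>x. x \<notin> R \<longrightarrow> {x, q x} \<in> T"
      proof (intro allI impI)
        fix x assume x: "x \<notin> R"
        show "{x, q x} \<in> T"
        proof (cases "x = w")
          case True then show ?thesis using vw q_def by (simp add: insert_commute)
        next
          case False then show ?thesis using q'2 x R'_def q_def T'T by auto
        qed
      qed
      have p3: "\<forall>a b. {a,b} \<in> T \<longrightarrow> q a = b \<or> q b = a"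
      proof (intro allI impI)
        fix a b assume ab: "{a,b} \<in> T"
        show "q a = b \<or> q b = a"
        proof (cases "{a,b} = {v,w}")
          case True
          then have "(a = v \<and> b = w) \<or> (a = w \<and> b = v)" by (auto simp: doubleton_eq_iff)
          then show ?thesis using q_def by auto
        next
          case False
          then have abT': "{a,b} \<in> T'" using ab T'_def by simp
          have anb: "a \<noteq> b"
          proof
            assume "a = b"
            then have "{a} \<in> T'" using abT' by simp
            then show False using ts' unfolding twosets_def by (force simp: doubleton_eq_iff)
          qed
          have qw: "q' w = w" using q'1 R'_def by simp
          from q'3 abT' have "q' a = b \<or> q' b = a" by blast
          then show ?thesis
          proof
            assume h: "q' a = b"
            then have "a \<noteq> w" using qw anb by auto
            then show ?thesis using h q_def by simp
          next
            assume h: "q' b = a"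
            then have "b \<noteq> w" using qw anb by auto
            then show ?thesis using h q_def by simp
          qed
        qed
      qed
      have rq: "reach q R x" if "reach q' R' x" for x
        using that
      proof (induction rule: reach.induct)
        case (reach_base x)
        show ?case
        proof (cases "x = w")
          case True
          have "reach q R v" using \<open>v \<in> R\<close> by (rule reach.reach_base)
          moreover have "q x = v" using True q_def by simp
          ultimately show ?thesis by (metis reach.reach_step)
        next
          case False then show ?thesis using reach_base R'_def by (simp add: reach.reach_base)
        qed
      next
        case (reach_step x)
        show ?case
        proof (cases "x = w")
          case True
          have "reach q R v" using \<open>v \<in> R\<close> by (rule reach.reach_base)
          moreover have "q x = v" using True q_def by simp
          ultimately show ?thesis by (metis reach.reach_step)
        next
          case False
          then have "q x = q' x" using q_def by simp
          then show ?thesis using reach_step.IH by (metis reach.reach_step)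
        qed
      qed
      show ?thesis using p1 p2 p3 rq q'4 by blast
    next
      case False
      define R' where "R' = insert v R"
      have cov': "\<forall>x. \<exists>\<rho>\<in>R'. (x,\<rho>) \<in> (erel T')\<^sup>*"
      proof
        fix x
        obtain \<rho> where \<rho>: "\<rho> \<in> R" "(x,\<rho>) \<in> (erel T)\<^sup>*" using cov by blast
        from K[OF \<rho>(2)] show "\<exists>\<rho>\<in>R'. (x,\<rho>) \<in> (erel T')\<^sup>*"
        proof (elim disjE conjE)
          assume "(x,\<rho>) \<in> (erel T')\<^sup>*" then show ?thesis using \<rho> R'_def by blast
        next
          assume "x = v" then show ?thesis using R'_def by blast
        next
          assume "\<rho> = v" then show ?thesis using False \<rho> by blast
        next
          assume "x = v" then show ?thesis using R'_def by blast
        qed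
      qed
      have uniq': "\<forall>\<rho>1\<in>R'. \<forall>\<rho>2\<in>R'. (\<rho>1,\<rho>2) \<in> (erel T')\<^sup>* \<longrightarrow> \<rho>1 = \<rho>2"
      proof (intro ballI impI)
        fix \<rho>1 \<rho>2 assume r1: "\<rho>1 \<in> R'" and r2: "\<rho>2 \<in> R'" and c: "(\<rho>1,\<rho>2) \<in> (erel T')\<^sup>*"
        show "\<rho>1 = \<rho>2"
        proof (cases "\<rho>1 = v")
          case True then show ?thesis using iso c by blast
        next
          case n1: False
          show ?thesis
          proof (cases "\<rho>2 = v")
            case True then show ?thesis using iso' c by blast
          next
            case False
            then show ?thesis using n1 r1 r2 R'_def uniq sub[OF c] by blast
          qed
        qed
      qed
      obtain q' where q'1: "\<forall>x. q' x = x \<longleftrightarrow> x \<in> R'" and q'2: "\<forall>x. x \<notin> R' \<longrightarrow> {x, q' x} \<in> T'"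
        and q'3: "\<forall>a b. {a,b} \<in> T' \<longrightarrow> q' a = b \<or> q' b = a" and q'4: "\<forall>x. reach q' R' x"
        using less.hyps[OF lt fin' ts' nc' cov' uniq'] by blast
      define q where "q = q'(v := w)"
      have p1: "\<forall>x. q x = x \<longleftrightarrow> x \<in> R"
      proof
        fix x show "q x = x \<longleftrightarrow> x \<in> R"
          using q'1 False vnw R'_def q_def by (cases "x = v") auto
      qed
      have p2: "\<forall>x. x \<notin> R \<longrightarrow> {x, q x} \<in> T"
      proof (intro allI impI)
        fix x assume x: "x \<notin> R"
        show "{x, q x} \<in> T"
        proof (cases "x = v")
          case True then show ?thesis using vw q_def by simp
        next
          case False then show ?thesis using q'2 x R'_def q_def T'T by auto
        qed
      qed
      have p3: "\<forall>a b. {a,b} \<in> T \<longrightarrow> q a = b \<or> q b = a"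
      proof (intro allI impI)
        fix a b assume ab: "{a,b} \<in> T"
        show "q a = b \<or> q b = a"
        proof (cases "{a,b} = {v,w}")
          case True
          then have "(a = v \<and> b = w) \<or> (a = w \<and> b = v)" by (auto simp: doubleton_eq_iff)
          then show ?thesis using q_def by auto
        next
          case False
          then have abT': "{a,b} \<in> T'" using ab T'_def by simp
          then have "a \<noteq> v" "b \<noteq> v" using T'v by auto
          moreover from q'3 abT' have "q' a = b \<or> q' b = a" by blast
          ultimately show ?thesis using q_def by auto
        qed
      qed
      have rq: "reach q R y" if "reach q' R' y" "y \<noteq> v" for y
        using that
      proof (induction rule: reach.induct)
        case (reach_base y)
        then show ?case using R'_def by (simp add: reach.reach_base)
      next
        case (reach_step y)
        show ?case
        proof (cases "q' y = y")
          case True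
          then have "y \<in> R" using q'1 R'_def reach_step.prems by simp
          then show ?thesis by (rule reach.reach_base)
        next
          case qy: False
          then have "y \<notin> R'" using q'1 by blast
          then have "{y, q' y} \<in> T'" using q'2 by blast
          then have "q' y \<noteq> v" using T'v by blast
          then have "reach q R (q' y)" using reach_step.IH by blast
          moreover have "q y = q' y" using q_def reach_step.prems by simp
          ultimately show ?thesis by (metis reach.reach_step)
        qed
      qed
      have rq2: "reach q R x" for x
      proof (cases "x = v")
        case True
        have "reach q R w" using rq q'4 vnw by metis
        moreover have "q x = w" using True q_def by simp
        ultimately show ?thesis by (metis reach.reach_step)
      next
        case False then show ?thesis using rq q'4 by blast
      qed
      show ?thesis using p1 p2 p3 rq2 by blast
    qed
  qed
qed


lemma walk:
  assumes "\<And>j. i \<le> j \<Longrightarrow> j < k \<Longrightarrow> {vs!j, vs!Suc j} \<in> T" "i \<le> k"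
  shows "(vs!i, vs!k) \<in> (erel T)\<^sup>*"
  using assms
proof (induction k)
  case 0 then show ?case by simp
next
  case (Suc k)
  show ?case
  proof (cases "i = Suc k")
    case True then show ?thesis by simp
  next
    case False
    then have ik: "i \<le> k" using Suc.prems by simp
    have "(vs!i, vs!k) \<in> (erel T)\<^sup>*" using Suc.IH Suc.prems ik by simp
    moreover have "(vs!k, vs!Suc k) \<in> erel T" using Suc.prems(1)[of k] ik by (simp add: erel_def)
    ultimately show ?thesis by (rule rtrancl_into_rtrancl)
  qed
qed

lemma doubleton_rtrancl:
  assumes "{x,y} = {a,b}" "(y,x) \<in> (erel T)\<^sup>*"
  shows "(a,b) \<in> (erel T)\<^sup>*"
proof -
  from assms(1) have "(x = a \<and> y = b) \<or> (x = b \<and> y = a)" by (auto simp: doubleton_eq_iff)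
  then show ?thesis using assms(2) erel_sym by blast
qed

lemma cycle_edge:
  assumes nc: "\<not> has_cycle T" and hc: "has_cycle (insert {a,b} T)"
  shows "(a,b) \<in> (erel T)\<^sup>*"
proof -
  obtain vs where len: "length vs \<ge> 3" and dist: "distinct vs"
    and cons: "\<And>i. Suc i < length vs \<Longrightarrow> {vs!i, vs!Suc i} \<in> insert {a,b} T"
    and clo: "{last vs, hd vs} \<in> insert {a,b} T"
    using hc unfolding has_cycle_def by blast
  define c where "c = length vs"
  have ne: "vs \<noteq> []" using len by auto
  have lastc: "last vs = vs!(c-1)" using ne c_def by (simp add: last_conv_nth)
  have hdc: "hd vs = vs!0" using ne by (simp add: hd_conv_nth)
  have idx: "i = j" if "i < c" "j < c" "vs!i = vs!j" for i j
    using that dist c_def nth_eq_iff_index_eq by blast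
  have c3: "c \<ge> 3" using len c_def by simp
  have cc: "{vs!j, vs!Suc j} \<noteq> {vs!(c-1), vs!0}" if "Suc j < c" for j
  proof
    assume h: "{vs!j, vs!Suc j} = {vs!(c-1), vs!0}"
    then have "(vs!j = vs!(c-1) \<and> vs!Suc j = vs!0) \<or> (vs!j = vs!0 \<and> vs!Suc j = vs!(c-1))"
      by (auto simp: doubleton_eq_iff)
    then show False
    proof
      assume "vs!j = vs!(c-1) \<and> vs!Suc j = vs!0"
      then have "j = c - 1" using idx that c3 by auto
      then show False using that by simp
    next
      assume "vs!j = vs!0 \<and> vs!Suc j = vs!(c-1)"
      then have "j = 0" "Suc j = c - 1" using idx that c3 by auto
      then show False using c3 by simp
    qed
  qed
  have ccons: "{vs!j, vs!Suc j} \<noteq> {vs!j', vs!Suc j'}" if "Suc j < c" "Suc j' < c" "j \<noteq> j'" for j j'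
  proof
    assume h: "{vs!j, vs!Suc j} = {vs!j', vs!Suc j'}"
    then have "(vs!j = vs!j' \<and> vs!Suc j = vs!Suc j') \<or> (vs!j = vs!Suc j' \<and> vs!Suc j = vs!j')"
      by (auto simp: doubleton_eq_iff)
    then show False
    proof
      assume "vs!j = vs!j' \<and> vs!Suc j = vs!Suc j'"
      then have "j = j'" using idx that by auto
      then show False using that by simp
    next
      assume "vs!j = vs!Suc j' \<and> vs!Suc j = vs!j'"
      then have "j = Suc j'" "Suc j = j'" using idx that by auto
      then show False by simp
    qed
  qed
  show ?thesis
  proof (cases "{vs!(c-1), vs!0} \<in> T")
    case False
    then have closeq: "{vs!(c-1), vs!0} = {a,b}" using clo lastc hdc by auto
    have allT: "{vs!j, vs!Suc j} \<in> T" if "Suc j < c" for j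
      using cons[of j] that c_def cc[OF that] closeq by auto
    have "(vs!0, vs!(c-1)) \<in> (erel T)\<^sup>*"
      by (rule walk) (use allT c3 in auto)
    then show ?thesis using doubleton_rtrancl[OF closeq] by blast
  next
    case cloT: True
    have "\<exists>j0. Suc j0 < c \<and> {vs!j0, vs!Suc j0} \<notin> T"
    proof (rule ccontr)
      assume "\<not> ?thesis"
      then have "\<forall>j. Suc j < c \<longrightarrow> {vs!j, vs!Suc j} \<in> T" by blast
      then have all: "\<And>j. Suc j < c \<Longrightarrow> {vs!j, vs!Suc j} \<in> T" by blast
      have "has_cycle T" unfolding has_cycle_def
      proof (intro exI[of _ vs] conjI allI impI)
        show "3 \<le> length vs" using len .
        show "distinct vs" using dist .
        fix i assume "Suc i < length vs" then show "{vs!i, vs!Suc i} \<in> T" using all c_def by simp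
      next
        show "{last vs, hd vs} \<in> T" using cloT lastc hdc by simp
      qed
      then show False using nc by simp
    qed
    then obtain j0 where j0: "Suc j0 < c" "{vs!j0, vs!Suc j0} \<notin> T" by blast
    have eq0: "{vs!j0, vs!Suc j0} = {a,b}" using cons[of j0] j0 c_def by auto
    have otherT: "{vs!j, vs!Suc j} \<in> T" if "Suc j < c" "j \<noteq> j0" for j
      using cons[of j] that c_def ccons[OF that(1) j0(1) that(2)] eq0 by auto
    have p1: "(vs!Suc j0, vs!(c-1)) \<in> (erel T)\<^sup>*"
      by (rule walk) (use otherT j0 in auto)
    have p2: "(vs!(c-1), vs!0) \<in> (erel T)\<^sup>*" using cloT by (rule erel_edge)
    have p3: "(vs!0, vs!j0) \<in> (erel T)\<^sup>*"
      by (rule walk) (use otherT j0 in auto)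
    have "(vs!Suc j0, vs!j0) \<in> (erel T)\<^sup>*" using p1 p2 p3 by (meson rtrancl_trans)
    then show ?thesis using doubleton_rtrancl[OF eq0] by blast
  qed
qed

lemma max_forest:
  assumes finE: "finite E" and UE: "U \<subseteq> E" and ncU: "\<not> has_cycle U"
  shows "\<exists>T. U \<subseteq> T \<and> T \<subseteq> E \<and> \<not> has_cycle T \<and> (\<forall>e\<in>E. e \<notin> T \<longrightarrow> has_cycle (insert e T))"
proof -
  define P where "P T \<longleftrightarrow> U \<subseteq> T \<and> T \<subseteq> E \<and> \<not> has_cycle T" for T
  have PU: "P U" using UE ncU unfolding P_def by blast
  have bnd: "\<forall>T. P T \<longrightarrow> card T < card E + 1"
  proof (intro allI impI)
    fix T assume "P T"
    then have "T \<subseteq> E" unfolding P_def by blast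
    then have "card T \<le> card E" by (rule card_mono[OF finE])
    then show "card T < card E + 1" by simp
  qed
  obtain T where PT: "P T" and mx: "\<forall>T'. P T' \<longrightarrow> card T' \<le> card T"
    using ex_has_greatest_nat[of P U card "card E + 1"] PU bnd by blast
  have finT: "finite T" using PT finE finite_subset unfolding P_def by blast
  have "\<forall>e\<in>E. e \<notin> T \<longrightarrow> has_cycle (insert e T)"
  proof (intro ballI impI)
    fix e assume e: "e \<in> E" "e \<notin> T"
    show "has_cycle (insert e T)"
    proof (rule ccontr)
      assume "\<not> has_cycle (insert e T)"
      then have "P (insert e T)" using PT e unfolding P_def by blast
      then have "card (insert e T) \<le> card T" using mx by blast
      then show False using finT e by simp
    qed
  qed
  then show ?thesis using PT unfolding P_def by blast
qed

lemma spanning: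
  assumes sg: "simple_graph n E" and cg: "connected_graph n E" and UE: "U \<subseteq> E"
    and ncU: "\<not> has_cycle U" and r: "r < n"
  shows "\<exists>p\<in>PM n {r} E. \<forall>a b. {a,b} \<in> U \<longrightarrow> p a = b \<or> p b = a"
proof -
  have finE: "finite E" by (rule simple_graph_finite[OF sg])
  obtain T where UT: "U \<subseteq> T" and TE: "T \<subseteq> E" and ncT: "\<not> has_cycle T"
    and mx: "\<forall>e\<in>E. e \<notin> T \<longrightarrow> has_cycle (insert e T)"
    using max_forest[OF finE UE ncU] by blast
  have finT: "finite T" using finE TE finite_subset by blast
  have tsT: "twosets T" unfolding twosets_def
  proof
    fix e assume "e \<in> T"
    then have "e \<in> E" using TE by blast
    then show "\<exists>a b. e = {a,b} \<and> a \<noteq> b" using sg unfolding simple_graph_def by blast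
  qed
  define R where "R = insert r {x. n \<le> x}"
  have Esub: "erel E \<subseteq> (erel T)\<^sup>*"
  proof
    fix z assume "z \<in> erel E"
    then obtain a b where z: "z = (a,b)" "{a,b} \<in> E" by (auto simp: erel_def)
    show "z \<in> (erel T)\<^sup>*"
    proof (cases "{a,b} \<in> T")
      case True then show ?thesis using z erel_edge by blast
    next
      case False
      then have "has_cycle (insert {a,b} T)" using mx z by blast
      then show ?thesis using cycle_edge[OF ncT] z by blast
    qed
  qed
  have conn: "(x, r) \<in> (erel T)\<^sup>*" if "x < n" for x
  proof -
    have "(x, r) \<in> (erel E)\<^sup>*" using cg that r unfolding connected_graph_def erel_def by blast
    moreover have "(erel E)\<^sup>* \<subseteq> (erel T)\<^sup>*" using Esub by (rule rtrancl_subset_rtrancl)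
    ultimately show ?thesis by blast
  qed
  have isob: "y = x" if "n \<le> x" "(x,y) \<in> (erel T)\<^sup>*" for x y
    using that(2)
  proof (induction rule: rtrancl_induct)
    case base then show ?case by simp
  next
    case (step y z)
    then have "{x,z} \<in> E" using TE by (auto simp: erel_def)
    then have "x < n" using simple_edge[OF sg] by blast
    then show ?case using that(1) by simp
  qed
  have cov: "\<forall>x. \<exists>\<rho>\<in>R. (x,\<rho>) \<in> (erel T)\<^sup>*"
  proof
    fix x show "\<exists>\<rho>\<in>R. (x,\<rho>) \<in> (erel T)\<^sup>*"
    proof (cases "x < n")
      case True then show ?thesis using conn R_def by blast
    next
      case False then show ?thesis using R_def by auto
    qed
  qed
  have uniq: "\<forall>\<rho>1\<in>R. \<forall>\<rho>2\<in>R. (\<rho>1,\<rho>2) \<in> (erel T)\<^sup>* \<longrightarrow> \<rho>1 = \<rho>2"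
  proof (intro ballI impI)
    fix \<rho>1 \<rho>2 assume r1: "\<rho>1 \<in> R" and r2: "\<rho>2 \<in> R" and c: "(\<rho>1,\<rho>2) \<in> (erel T)\<^sup>*"
    show "\<rho>1 = \<rho>2"
    proof (cases "n \<le> \<rho>1")
      case True then show ?thesis using isob[OF True c] by simp
    next
      case False
      show ?thesis
      proof (cases "n \<le> \<rho>2")
        case True then show ?thesis using isob[OF True erel_sym[OF c]] by simp
      next
        case False
        then show ?thesis using \<open>\<not> n \<le> \<rho>1\<close> r1 r2 R_def by auto
      qed
    qed
  qed
  obtain q where q1: "\<forall>x. q x = x \<longleftrightarrow> x \<in> R" and q2: "\<forall>x. x \<notin> R \<longrightarrow> {x, q x} \<in> T"
    and q3: "\<forall>a b. {a,b} \<in> T \<longrightarrow> q a = b \<or> q b = a" and q4: "\<forall>x. reach q R x"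
    using orient[OF finT tsT ncT cov uniq] by blast
  have rr: "reach q {r} x" if "reach q R x" "x < n" for x
    using that
  proof (induction rule: reach.induct)
    case (reach_base x) then show ?case using R_def by (auto intro: reach.reach_base)
  next
    case (reach_step x)
    show ?case
    proof (cases "x \<in> R")
      case True then show ?thesis using R_def reach_step.prems by (auto intro: reach.reach_base)
    next
      case False
      then have "{x, q x} \<in> E" using q2 TE by blast
      then have "q x < n" using simple_edge[OF sg] by blast
      then have "reach q {r} (q x)" using reach_step.IH by blast
      then show ?thesis by (rule reach.reach_step)
    qed
  qed
  have "q \<in> PM n {r} E"
    unfolding PM_def
  proof (intro CollectI conjI allI impI)
    fix x assume "x \<in> {r} \<or> n \<le> x" then show "q x = x" using q1 R_def by auto
  next
    fix x assume x: "x < n" "x \<notin> {r}"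
    then have "x \<notin> R" using R_def by auto
    then show "{x, q x} \<in> E" using q2 TE by blast
  next
    fix x assume x: "x < n" "x \<notin> {r}"
    then show "reach q {r} x" using rr q4 by blast
  qed
  moreover have "\<forall>a b. {a,b} \<in> U \<longrightarrow> q a = b \<or> q b = a" using q3 UT by blast
  ultimately show ?thesis by blast
qed



definition phi :: "(nat \<Rightarrow> nat) \<Rightarrow> (nat \<times> nat) set \<Rightarrow> (nat \<Rightarrow> nat \<Rightarrow> real) \<Rightarrow> nat \<Rightarrow> real" where
  "phi p S x z = (if (z, p z) \<in> S then x z (p z) else 0) - (if (p z, z) \<in> S then x (p z) z else 0)"

lemma reach_no2cycle: "reach p R x \<Longrightarrow> x \<notin> R \<Longrightarrow> p x \<notin> R \<Longrightarrow> p (p x) \<noteq> x"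
proof (induction rule: reach.induct)
  case (reach_base x) then show ?case by simp
next
  case (reach_step x)
  show ?case
  proof
    assume h: "p (p x) = x"
    then have "p (p x) \<notin> R" using reach_step.prems by simp
    then have "p (p (p x)) \<noteq> p x" using reach_step.IH reach_step.prems by blast
    then show False using h by simp
  qed
qed

lemma reach_funpow: "reach p R x \<Longrightarrow> \<exists>k. (p ^^ k) x \<in> R"
proof (induction rule: reach.induct)
  case (reach_base x) then show ?case by (intro exI[of _ 0]) simp
next
  case (reach_step x)
  then obtain k where "(p ^^ k) (p x) \<in> R" by blast
  then have "(p ^^ Suc k) x \<in> R" by (simp add: funpow_Suc_right del: funpow.simps)
  then show ?case by blast
qed

lemma PM_props:
  assumes "p \<in> PM n R E"
  shows "\<And>x. x \<in> R \<or> n \<le> x \<Longrightarrow> p x = x"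
    and "\<And>x. x < n \<Longrightarrow> x \<notin> R \<Longrightarrow> {x, p x} \<in> E"
    and "\<And>x. x < n \<Longrightarrow> x \<notin> R \<Longrightarrow> reach p R x"
  using assms unfolding PM_def by auto

lemma sum_filter_eq:
  assumes "finite W" "A \<subseteq> W"
  shows "(\<Sum>j\<in>A. f j) = (\<Sum>j\<in>W. if j \<in> A then f j else (0::real))"
  using assms by (simp add: sum.If_cases Int_absorb1)

lemma conserv_phi:
  assumes sg: "simple_graph n E" and r: "r < n" and p: "p \<in> PM n {r} E"
    and SE: "\<forall>(i,j)\<in>S. {i,j} \<in> E" and compat: "\<forall>(i,j)\<in>S. p i = j \<or> p j = i"
    and y: "y < n"
  shows "(\<Sum>j\<in>{j. (y,j) \<in> S}. x y j) - (\<Sum>i\<in>{i. (i,y) \<in> S}. x i y)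
         = phi p S x y - (\<Sum>z\<in>{z. z < n \<and> z \<noteq> r \<and> p z = y}. phi p S x z)"
proof -
  have compat': "\<And>a b. (a,b) \<in> S \<Longrightarrow> p a = b \<or> p b = a" using compat by auto
  have SE': "\<And>a b. (a,b) \<in> S \<Longrightarrow> {a,b} \<in> E" using SE by auto
  define C where "C = {z. z < n \<and> z \<noteq> r \<and> p z = y}"
  define W where "W = insert (p y) C"
  have finC: "finite C" unfolding C_def by simp
  have finW: "finite W" unfolding W_def using finC by simp
  have pr: "p r = r" using PM_props(1)[OF p] by simp
  have noloop: "(a,a) \<notin> S" for a
  proof
    assume "(a,a) \<in> S" then have "{a,a} \<in> E" using SE' by blast
    then show False using simple_edge[OF sg] by blast
  qed
  have pyC: "p y \<notin> C"
  proof
    assume h: "p y \<in> C"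
    then have pyr: "p y \<noteq> r" and ppy: "p (p y) = y" unfolding C_def by auto
    show False
    proof (cases "y = r")
      case True then show False using pyr pr by simp
    next
      case False
      then have "reach p {r} y" using PM_props(3)[OF p y] by simp
      then have "p (p y) \<noteq> y" using reach_no2cycle False pyr by blast
      then show False using ppy by simp
    qed
  qed
  have edge_n: "a < n \<and> b < n" if "(a,b) \<in> S" for a b
    using SE'[OF that] simple_edge[OF sg] by blast
  have outW: "{j. (y,j) \<in> S} \<subseteq> W"
  proof
    fix j assume "j \<in> {j. (y,j) \<in> S}"
    then have yj: "(y,j) \<in> S" by simp
    then have "p y = j \<or> p j = y" using compat' by blast
    then show "j \<in> W"
    proof
      assume "p y = j" then show ?thesis unfolding W_def by simp
    next
      assume pj: "p j = y"
      have "j \<noteq> r"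
      proof
        assume "j = r" then have "y = r" using pj pr by simp
        then show False using yj \<open>j = r\<close> noloop by simp
      qed
      then show ?thesis using pj edge_n[OF yj] unfolding W_def C_def by simp
    qed
  qed
  have inW: "{i. (i,y) \<in> S} \<subseteq> W"
  proof
    fix i assume "i \<in> {i. (i,y) \<in> S}"
    then have iy: "(i,y) \<in> S" by simp
    then have "p i = y \<or> p y = i" using compat' by blast
    then show "i \<in> W"
    proof
      assume "p y = i" then show ?thesis unfolding W_def by simp
    next
      assume pi: "p i = y"
      have "i \<noteq> r"
      proof
        assume "i = r" then have "y = r" using pi pr by simp
        then show False using iy \<open>i = r\<close> noloop by simp
      qed
      then show ?thesis using pi edge_n[OF iy] unfolding W_def C_def by simp
    qed
  qed
  have out: "(\<Sum>j\<in>{j. (y,j) \<in> S}. x y j) = (if (y, p y) \<in> S then x y (p y) else 0)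
              + (\<Sum>z\<in>C. if (y,z) \<in> S then x y z else 0)"
  proof -
    have "(\<Sum>j\<in>{j. (y,j) \<in> S}. x y j) = (\<Sum>j\<in>W. if j \<in> {j. (y,j) \<in> S} then x y j else 0)"
      by (rule sum_filter_eq[OF finW outW])
    also have "\<dots> = (if (y, p y) \<in> S then x y (p y) else 0) + (\<Sum>z\<in>C. if (y,z) \<in> S then x y z else 0)"
      unfolding W_def using finC pyC by (simp add: sum.insert)
    finally show ?thesis .
  qed
  have inn: "(\<Sum>i\<in>{i. (i,y) \<in> S}. x i y) = (if (p y, y) \<in> S then x (p y) y else 0)
              + (\<Sum>z\<in>C. if (z,y) \<in> S then x z y else 0)"
  proof -
    have "(\<Sum>i\<in>{i. (i,y) \<in> S}. x i y) = (\<Sum>i\<in>W. if i \<in> {i. (i,y) \<in> S} then x i y else 0)"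
      by (rule sum_filter_eq[OF finW inW])
    also have "\<dots> = (if (p y, y) \<in> S then x (p y) y else 0) + (\<Sum>z\<in>C. if (z,y) \<in> S then x z y else 0)"
      unfolding W_def using finC pyC by (simp add: sum.insert)
    finally show ?thesis .
  qed
  have phiC: "(\<Sum>z\<in>C. phi p S x z) = (\<Sum>z\<in>C. (if (z,y) \<in> S then x z y else 0) - (if (y,z) \<in> S then x y z else 0))"
    by (rule sum.cong) (auto simp: C_def phi_def)
  have "(\<Sum>z\<in>C. phi p S x z) = (\<Sum>z\<in>C. if (z,y) \<in> S then x z y else 0) - (\<Sum>z\<in>C. if (y,z) \<in> S then x y z else 0)"
    unfolding phiC by (rule sum_subtractf)
  then show ?thesis unfolding C_def[symmetric] using out inn by (simp add: phi_def)
qed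


lemma psi_zero:
  fixes \<psi> :: "nat \<Rightarrow> real"
  assumes p: "p \<in> PM n {r} E" and r: "r < n"
    and rec: "\<And>y. y < n \<Longrightarrow> \<psi> y = (\<Sum>z\<in>{z. z < n \<and> z \<noteq> r \<and> p z = y}. \<psi> z)"
    and psir: "\<psi> r = 0"
  shows "\<forall>z<n. \<psi> z = 0"
proof (rule ccontr)
  assume "\<not> (\<forall>z<n. \<psi> z = 0)"
  then have Zne: "{z. z < n \<and> \<psi> z \<noteq> 0} \<noteq> {}" by auto
  define Z where "Z = {z. z < n \<and> \<psi> z \<noteq> 0}"
  have finZ: "finite Z" unfolding Z_def by simp
  define depth where "depth z = (LEAST k. (p ^^ k) z = r)" for z
  have reachr: "reach p {r} z" if "z < n" for z
  proof (cases "z = r")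
    case True then show ?thesis by (simp add: reach.reach_base)
  next
    case False then show ?thesis using PM_props(3)[OF p that] by simp
  qed
  have dex: "(p ^^ depth z) z = r" if zn: "z < n" for z
  proof -
    obtain k where "(p ^^ k) z \<in> {r}" using reach_funpow[OF reachr[OF zn]] by blast
    then have "\<exists>k. (p ^^ k) z = r" by blast
    then show ?thesis unfolding depth_def by (rule LeastI_ex)
  qed
  have dchild: "depth z < depth c" if "c < n" "c \<noteq> r" "p c = z" for c z
  proof -
    have dc: "(p ^^ depth c) c = r" by (rule dex[OF that(1)])
    have "depth c \<noteq> 0"
    proof
      assume "depth c = 0" then show False using dc that(2) by simp
    qed
    then obtain k where k: "depth c = Suc k" using not0_implies_Suc by blast
    have "(p ^^ k) (p c) = r" using dc k by (simp add: funpow_Suc_right del: funpow.simps)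
    then have "(p ^^ k) z = r" using that(3) by simp
    then have "depth z \<le> k" unfolding depth_def by (rule Least_le)
    then show ?thesis using k by simp
  qed
  define m where "m = Max (depth ` Z)"
  have "m \<in> depth ` Z" unfolding m_def using finZ Zne Z_def by (intro Max_in) auto
  then obtain z where zZ: "z \<in> Z" and dz: "depth z = m" by blast
  have mx: "depth z' \<le> m" if "z' \<in> Z" for z'
    unfolding m_def using finZ that by (intro Max_ge) auto
  have zn: "z < n" and psz: "\<psi> z \<noteq> 0" using zZ Z_def by auto
  have "(\<Sum>c\<in>{c. c < n \<and> c \<noteq> r \<and> p c = z}. \<psi> c) = 0"
  proof (rule sum.neutral, rule ballI)
    fix c assume "c \<in> {c. c < n \<and> c \<noteq> r \<and> p c = z}"
    then have c: "c < n" "c \<noteq> r" "p c = z" by auto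
    have "depth z < depth c" by (rule dchild[OF c])
    then have "c \<notin> Z" using mx dz by fastforce
    then show "\<psi> c = 0" using c Z_def by auto
  qed
  then have "\<psi> z = 0" using rec[OF zn] by simp
  then show False using psz by simp
qed

lemma feasible_unpack:
  assumes "feasible_config n E g d cap S"
  obtains x where "\<And>a b. (a,b) \<in> S \<Longrightarrow> {a,b} \<in> E" "acyclic S" "\<not> has_cycle (underlying S)"
    "\<And>a b. (a,b) \<in> S \<Longrightarrow> 0 < x a b"
    "\<And>k. k < n \<Longrightarrow> (\<Sum>j\<in>{j. (k, j) \<in> S}. x k j) - (\<Sum>i\<in>{i. (i, k) \<in> S}. x i k) = g k - d k"
proof -
  from assms obtain x where h1: "\<forall>(i, j)\<in>S. {i, j} \<in> E" and h2: "polyforest S"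
    and h3: "\<forall>(i, j)\<in>S. 0 < x i j \<and> x i j \<le> cap i j"
    and h4: "\<forall>k<n. (\<Sum>j\<in>{j. (k, j) \<in> S}. x k j) - (\<Sum>i\<in>{i. (i, k) \<in> S}. x i k) = g k - d k"
    unfolding feasible_config_def by blast
  show ?thesis
  proof (rule that[of x])
    show "\<And>a b. (a,b) \<in> S \<Longrightarrow> {a,b} \<in> E" using h1 by auto
    show "acyclic S" using h2 unfolding polyforest_def by blast
    show "\<not> has_cycle (underlying S)" using h2 unfolding polyforest_def by blast
    show "\<And>a b. (a,b) \<in> S \<Longrightarrow> 0 < x a b" using h3 by auto
    show "\<And>k. k < n \<Longrightarrow> (\<Sum>j\<in>{j. (k, j) \<in> S}. x k j) - (\<Sum>i\<in>{i. (i, k) \<in> S}. x i k) = g k - d k"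
      using h4 by blast
  qed
qed

lemma recover:
  assumes sg: "simple_graph n E" and p: "p \<in> PM n {r} E"
    and SE: "\<And>a b. (a,b) \<in> S \<Longrightarrow> {a,b} \<in> E" and ac: "acyclic S"
    and pos: "\<And>a b. (a,b) \<in> S \<Longrightarrow> 0 < x a b"
    and compat: "\<And>a b. (a,b) \<in> S \<Longrightarrow> p a = b \<or> p b = a"
  shows "(a,b) \<in> S \<longleftrightarrow> (a < n \<and> b < n \<and> ((p a = b \<and> a \<noteq> r \<and> phi p S x a > 0) \<or> (p b = a \<and> b \<noteq> r \<and> phi p S x b < 0)))"
proof
  have pr: "p r = r" using PM_props(1)[OF p] by simp
  assume ab: "(a,b) \<in> S"
  have ed: "a < n" "b < n" "a \<noteq> b" using simple_edge[OF sg SE[OF ab]] by auto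
  have ba: "(b,a) \<notin> S"
  proof
    assume "(b,a) \<in> S"
    then have "(a,a) \<in> S\<^sup>+" using ab by (meson trancl.intros)
    then show False using ac unfolding acyclic_def by blast
  qed
  from compat[OF ab] show "a < n \<and> b < n \<and> ((p a = b \<and> a \<noteq> r \<and> phi p S x a > 0) \<or> (p b = a \<and> b \<noteq> r \<and> phi p S x b < 0))"
  proof
    assume pa: "p a = b"
    have "a \<noteq> r" using pa pr ed by auto
    moreover have "phi p S x a > 0" using pa ab ba pos[OF ab] by (simp add: phi_def)
    ultimately show ?thesis using ed pa by blast
  next
    assume pb: "p b = a"
    have "b \<noteq> r" using pb pr ed by auto
    moreover have "phi p S x b < 0" using pb ab ba pos[OF ab] by (simp add: phi_def)
    ultimately show ?thesis using ed pb by blast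
  qed
next
  assume h: "a < n \<and> b < n \<and> ((p a = b \<and> a \<noteq> r \<and> phi p S x a > 0) \<or> (p b = a \<and> b \<noteq> r \<and> phi p S x b < 0))"
  show "(a,b) \<in> S"
  proof (rule ccontr)
    assume nab: "(a,b) \<notin> S"
    from h have "(p a = b \<and> phi p S x a > 0) \<or> (p b = a \<and> phi p S x b < 0)" by blast
    then show False
    proof
      assume h: "p a = b \<and> phi p S x a > 0"
      have "phi p S x a \<le> 0"
      proof (cases "(b,a) \<in> S")
        case True then show ?thesis using h nab pos[OF True] unfolding phi_def by simp
      next
        case False then show ?thesis using h nab unfolding phi_def by simp
      qed
      then show False using h by simp
    next
      assume h: "p b = a \<and> phi p S x b < 0"
      have "phi p S x b \<ge> 0"
      proof (cases "(b,a) \<in> S")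
        case True then show ?thesis using h nab pos[OF True] unfolding phi_def by simp
      next
        case False then show ?thesis using h nab unfolding phi_def by simp
      qed
      then show False using h by simp
    qed
  qed
qed

lemma config_unique:
  assumes sg: "simple_graph n E" and r: "r < n" and p: "p \<in> PM n {r} E"
    and f1: "feasible_config n E g d cap S1" and f2: "feasible_config n E g d cap S2"
    and c1: "\<And>a b. (a,b) \<in> S1 \<Longrightarrow> p a = b \<or> p b = a"
    and c2: "\<And>a b. (a,b) \<in> S2 \<Longrightarrow> p a = b \<or> p b = a"
  shows "S1 = S2"
proof -
  obtain x1 where SE1: "\<And>a b. (a,b) \<in> S1 \<Longrightarrow> {a,b} \<in> E" and ac1: "acyclic S1"
    and pos1: "\<And>a b. (a,b) \<in> S1 \<Longrightarrow> 0 < x1 a b"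
    and cons1: "\<And>k. k < n \<Longrightarrow> (\<Sum>j\<in>{j. (k, j) \<in> S1}. x1 k j) - (\<Sum>i\<in>{i. (i, k) \<in> S1}. x1 i k) = g k - d k"
    using feasible_unpack[OF f1] by metis
  obtain x2 where SE2: "\<And>a b. (a,b) \<in> S2 \<Longrightarrow> {a,b} \<in> E" and ac2: "acyclic S2"
    and pos2: "\<And>a b. (a,b) \<in> S2 \<Longrightarrow> 0 < x2 a b"
    and cons2: "\<And>k. k < n \<Longrightarrow> (\<Sum>j\<in>{j. (k, j) \<in> S2}. x2 k j) - (\<Sum>i\<in>{i. (i, k) \<in> S2}. x2 i k) = g k - d k"
    using feasible_unpack[OF f2] by metis
  define C where "C y = {z. z < n \<and> z \<noteq> r \<and> p z = y}" for y
  have h1: "g y - d y = phi p S1 x1 y - (\<Sum>z\<in>C y. phi p S1 x1 z)" if "y < n" for y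
    using cons1[OF that] conserv_phi[OF sg r p _ _ that, of S1 x1] SE1 c1 unfolding C_def by auto
  have h2: "g y - d y = phi p S2 x2 y - (\<Sum>z\<in>C y. phi p S2 x2 z)" if "y < n" for y
    using cons2[OF that] conserv_phi[OF sg r p _ _ that, of S2 x2] SE2 c2 unfolding C_def by auto
  define \<psi> where "\<psi> z = phi p S1 x1 z - phi p S2 x2 z" for z
  have rec: "\<psi> y = (\<Sum>z\<in>{z. z < n \<and> z \<noteq> r \<and> p z = y}. \<psi> z)" if "y < n" for y
  proof -
    have "(\<Sum>z\<in>C y. \<psi> z) = (\<Sum>z\<in>C y. phi p S1 x1 z) - (\<Sum>z\<in>C y. phi p S2 x2 z)"
      unfolding \<psi>_def by (rule sum_subtractf)
    then have "\<psi> y = (\<Sum>z\<in>C y. \<psi> z)" using h1[OF that] h2[OF that] unfolding \<psi>_def by linarith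
    then show ?thesis unfolding C_def .
  qed
  have pr: "p r = r" using PM_props(1)[OF p] by simp
  have nl1: "(r,r) \<notin> S1" using SE1 simple_edge[OF sg] by blast
  have nl2: "(r,r) \<notin> S2" using SE2 simple_edge[OF sg] by blast
  have psir: "\<psi> r = 0" unfolding \<psi>_def phi_def using pr nl1 nl2 by simp
  have z: "\<forall>z<n. \<psi> z = 0" by (rule psi_zero[OF p r rec psir])
  then have eqphi: "phi p S1 x1 z = phi p S2 x2 z" if "z < n" for z using that unfolding \<psi>_def by auto
  show ?thesis
  proof (rule Set.set_eqI[where 'a="nat \<times> nat"])
    fix ab :: "nat \<times> nat"
    obtain a b where ab: "ab = (a,b)" by (cases ab)
    have "(a,b) \<in> S1 \<longleftrightarrow> (a,b) \<in> S2"
      using recover[OF sg p SE1 ac1 pos1 c1, where a=a and b=b] recover[OF sg p SE2 ac2 pos2 c2, where a=a and b=b] eqphi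
      by auto
    then show "ab \<in> S1 \<longleftrightarrow> ab \<in> S2" using ab by simp
  qed
qed


theorem lemma1:
  fixes n :: nat and E :: "nat set set" and Vg :: "nat set"
    and g d :: "nat \<Rightarrow> real" and cap :: "nat \<Rightarrow> nat \<Rightarrow> real" and r :: nat
  assumes "simple_graph n E" and "connected_graph n E"
    and "Vg \<subset> {0..<n}"
    and "\<forall>i\<in>Vg. g i > 0" and "\<forall>i\<in>{0..<n} - Vg. g i = 0"
    and "\<forall>j\<in>{0..<n} - Vg. d j > 0" and "\<forall>j\<in>Vg. d j = 0"
    and "(\<Sum>i<n. g i) = (\<Sum>j<n. d j)"
    and "\<forall>i j. {i, j} \<in> E \<longrightarrow> cap i j \<ge> 0"
    and "r < n"
  shows "real (card {S. feasible_config n E g d cap S})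
           \<le> det (mat_delete (laplacian n E) r r)"
proof -
  note sg = assms(1) and cg = assms(2) and r = assms(10)
  define F where "F = {S. feasible_config n E g d cap S}"
  define P where "P = PM n {r} E"
  define compat where "compat p S \<longleftrightarrow> p \<in> P \<and> (\<forall>a b. (a,b) \<in> S \<longrightarrow> p a = b \<or> p b = a)" for p S
  have ex: "\<exists>p. compat p S" if SF: "S \<in> F" for S
  proof -
    have feas: "feasible_config n E g d cap S" using SF F_def by simp
    obtain x where SE: "\<And>a b. (a,b) \<in> S \<Longrightarrow> {a,b} \<in> E" and nc: "\<not> has_cycle (underlying S)"
      using feasible_unpack[OF feas] by blast
    have UE: "underlying S \<subseteq> E" unfolding underlying_def using SE by blast
    obtain p where p: "p \<in> PM n {r} E" and pc: "\<forall>a b. {a,b} \<in> underlying S \<longrightarrow> p a = b \<or> p b = a"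
      using spanning[OF sg cg UE nc r] by blast
    have "\<forall>a b. (a,b) \<in> S \<longrightarrow> p a = b \<or> p b = a"
    proof (intro allI impI)
      fix a b assume "(a,b) \<in> S"
      then have "{a,b} \<in> underlying S" unfolding underlying_def by blast
      then show "p a = b \<or> p b = a" using pc by blast
    qed
    then show ?thesis using p unfolding compat_def P_def by blast
  qed
  define f where "f S = (SOME p. compat p S)" for S
  have fS: "compat (f S) S" if "S \<in> F" for S
    unfolding f_def using ex[OF that] by (rule someI_ex)
  have inj: "inj_on f F"
  proof (rule inj_onI)
    fix S1 S2 assume s1: "S1 \<in> F" and s2: "S2 \<in> F" and eq: "f S1 = f S2"
    have c1: "compat (f S1) S1" by (rule fS[OF s1])
    have c2: "compat (f S1) S2" using fS[OF s2] eq by simp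
    show "S1 = S2"
    proof (rule config_unique[OF sg r])
      show "f S1 \<in> PM n {r} E" using c1 unfolding compat_def P_def by blast
      show "feasible_config n E g d cap S1" using s1 F_def by blast
      show "feasible_config n E g d cap S2" using s2 F_def by blast
      show "\<And>a b. (a,b) \<in> S1 \<Longrightarrow> f S1 a = b \<or> f S1 b = a" using c1 unfolding compat_def by blast
      show "\<And>a b. (a,b) \<in> S2 \<Longrightarrow> f S1 a = b \<or> f S1 b = a" using c2 unfolding compat_def by blast
    qed
  qed
  have img: "f ` F \<subseteq> P" using fS unfolding compat_def by blast
  have finP: "finite P" unfolding P_def by (rule PM_finite[OF sg])
  have "card F \<le> card P" by (rule card_inj_on_le[OF inj img finP])
  moreover have "det (mat_delete (laplacian n E) r r) = real (card P)"
    unfolding P_def using det_MR_laplacian[OF r] matrix_tree[OF sg] by simp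
  ultimately show ?thesis unfolding F_def by simp
qed


end
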